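(* For all $n\ge1$ and all integers $h$ with $0\le h\le \frac12n^2-\frac52n$, $|\mathcal C^h_n| \ge n^{n-2}\left(\frac{n^2-3n}{2(n+h)}\right)^h$.
   Context: Graphs are finite and simple. For an integer $h\ge0$, $\mathcal C^h_n$ is the set of connected graphs on vertex set $[n]$ with at most $h+n-1$ edges. *)

theory Defs
  imports Complex_Main
begin

definition simple_graph :: "'a set \<Rightarrow> 'a set set \<Rightarrow> bool" where
  "simple_graph V E \<longleftrightarrow> (\<forall>e\<in>E. e \<subseteq> V \<and> card e = 2)"

definition walk :: "'a set set \<Rightarrow> 'a list \<Rightarrow> bool" where
  "walk E xs \<longleftrightarrow> xs \<noteq> [] \<and> (\<forall>i. Suc i < length xs \<longrightarrow> {xs ! i, xs ! Suc i} \<in> E)"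

definition connected_graph :: "'a set \<Rightarrow> 'a set set \<Rightarrow> bool" where
  "connected_graph V E \<longleftrightarrow> V \<noteq> {} \<and>
     (\<forall>u\<in>V. \<forall>v\<in>V. \<exists>xs. walk E xs \<and> hd xs = u \<and> last xs = v)"

definition C :: "nat \<Rightarrow> nat \<Rightarrow> nat set set set" where
  "C h n = {E. simple_graph {1..n} E \<and> connected_graph {1..n} E \<and> card E \<le> h + n - 1}"

end

theory Submission
  imports Defs "HOL-Library.FuncSet"
begin

inductive reach :: "('a \<Rightarrow> 'a) \<Rightarrow> 'a set \<Rightarrow> 'a \<Rightarrow> bool" for f R where
  rbase: "a \<in> R \<Longrightarrow> reach f R a"
| rstep: "reach f R (f a) \<Longrightarrow> reach f R a"

definition acyc :: "'a set \<Rightarrow> 'a set \<Rightarrow> ('a \<Rightarrow> 'a) set" where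
  "acyc A R = {f \<in> A \<rightarrow>\<^sub>E (A \<union> R). \<forall>a\<in>A. reach f R a}"

lemma reach_restrict:
  assumes f: "f \<in> acyc A R" and dis: "A \<inter> R = {}" and S: "S = {a\<in>A. f a \<in> R}"
  shows "reach f R x \<Longrightarrow> x \<in> A - S \<Longrightarrow> reach (restrict f (A - S)) S x"
proof (induction rule: reach.induct)
  case (rbase a)
  then show ?case using dis by auto
next
  case (rstep a)
  have fa: "f a \<in> A \<union> R" using f rstep.prems unfolding acyc_def by auto
  have aS: "a \<notin> S" "a \<in> A" using rstep.prems by auto
  then have "f a \<notin> R" using S by auto
  with fa have faA: "f a \<in> A" by auto
  have eq: "restrict f (A - S) a = f a" using rstep.prems by simp
  show ?case
  proof (cases "f a \<in> S")
    case True
    then have "reach (restrict f (A - S)) S (f a)"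
      by (rule reach.rbase)
    then show ?thesis using eq by (metis reach.rstep)
  next
    case False
    then have "reach (restrict f (A - S)) S (f a)" using rstep.IH faA by blast
    then show ?thesis using eq by (metis reach.rstep)
  qed
qed

lemma reach_merge:
  assumes h: "h \<in> acyc (A - S) S" and g: "g \<in> S \<rightarrow>\<^sub>E R" and SA: "S \<subseteq> A"
    and m: "m = (\<lambda>x. if x \<in> S then g x else h x)"
  shows "reach h S x \<Longrightarrow> x \<in> A \<Longrightarrow> reach m R x"
proof (induction rule: reach.induct)
  case (rbase a)
  then have "m a \<in> R" using g m by auto
  then show ?case by (metis reach.rstep reach.rbase)
next
  case (rstep a)
  show ?case
  proof (cases "a \<in> S")
    case True
    then have "m a \<in> R" using g m by auto
    then show ?thesis by (metis reach.rstep reach.rbase)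
  next
    case False
    then have "h a \<in> A" using h rstep.prems SA unfolding acyc_def by auto
    then have "reach m R (h a)" using rstep.IH by blast
    moreover have "m a = h a" using False m by simp
    ultimately show ?thesis by (metis reach.rstep)
  qed
qed

lemma reach_not_fix: "reach f R x \<Longrightarrow> x \<notin> R \<Longrightarrow> f x \<noteq> x"
  by (induction rule: reach.induct) auto

lemma reach_no2cycle: "reach f R x \<Longrightarrow> x \<notin> R \<Longrightarrow> f x \<notin> R \<Longrightarrow> f (f x) \<noteq> x"
  by (induction rule: reach.induct) auto

lemma ident_term:
  assumes "i \<le> m'"
  shows "(Suc m' choose Suc i) * (if Suc i = Suc m' then 1 else Suc i * (Suc m')^(Suc m' - Suc i - 1))
       = (m' choose i) * (Suc m')^(m' - i)"
proof (cases "i = m'")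
  case True then show ?thesis by simp
next
  case False
  then have "m' - i = Suc (m' - i - 1)" using assms by simp
  then have "(Suc m')^(m' - i) = Suc m' * (Suc m')^(m' - i - 1)" by (metis power_Suc)
  moreover have "(Suc m' choose Suc i) * Suc i = Suc m' * (m' choose i)"
    by (metis Suc_times_binomial_eq)
  ultimately have "(Suc m' choose Suc i) * (Suc i * (Suc m')^(m' - i - 1)) = (m' choose i) * (Suc m')^(m' - i)"
    by (metis mult.assoc mult.commute)
  then show ?thesis using False by simp
qed

lemma ident:
  "(\<Sum>j\<in>{1..Suc m'}. (Suc m' choose j) * (k^j * (if j = Suc m' then 1 else j * (Suc m')^(Suc m' - j - 1))))
    = k * (Suc m' + k)^m'"
proof -
  have "(\<Sum>j\<in>{1..Suc m'}. (Suc m' choose j) * (k^j * (if j = Suc m' then 1 else j * (Suc m')^(Suc m' - j - 1))))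
     = (\<Sum>i\<in>{0..m'}. (Suc m' choose Suc i) * (k^Suc i * (if Suc i = Suc m' then 1 else Suc i * (Suc m')^(Suc m' - Suc i - 1))))"
    by (simp only: One_nat_def sum.shift_bounds_cl_Suc_ivl)
  also have "\<dots> = (\<Sum>i\<in>{0..m'}. k * ((m' choose i) * k^i * (Suc m')^(m' - i)))"
  proof (rule sum.cong[OF refl])
    fix i assume "i \<in> {0..m'}"
    then have "i \<le> m'" by simp
    from ident_term[OF this] show "(Suc m' choose Suc i) * (k^Suc i * (if Suc i = Suc m' then 1 else Suc i * (Suc m')^(Suc m' - Suc i - 1)))
      = k * ((m' choose i) * k^i * (Suc m')^(m' - i))"
      by (simp add: mult_ac)
  qed
  also have "\<dots> = k * (\<Sum>i\<le>m'. (m' choose i) * k^i * (Suc m')^(m' - i))"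
    by (simp add: sum_distrib_left atLeast0AtMost)
  also have "\<dots> = k * (k + Suc m')^m'"
  proof -
    have "(k + Suc m')^m' = (\<Sum>i\<le>m'. (m' choose i) * k^i * (Suc m')^(m' - i))"
      using binomial_ring[of k "Suc m'" m'] by simp
    then show ?thesis by simp
  qed
  finally show ?thesis by (simp add: add.commute)
qed

lemma acyc_nonempty_root:
  assumes f: "f \<in> acyc A R" and dis: "A \<inter> R = {}"
  shows "reach f R x \<Longrightarrow> x \<in> A \<Longrightarrow> \<exists>b\<in>A. f b \<in> R"
proof (induction rule: reach.induct)
  case (rbase a) then show ?case using dis by auto
next
  case (rstep a)
  have "f a \<in> A \<union> R" using f rstep.prems unfolding acyc_def by auto
  then show ?case using rstep by auto
qed

lemma acyc_finite: "finite A \<Longrightarrow> finite R \<Longrightarrow> finite (acyc A R)"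
  unfolding acyc_def by (rule finite_subset[of _ "A \<rightarrow>\<^sub>E (A \<union> R)"]) (auto intro: finite_PiE)

lemma fib_bij:
  assumes dis: "A \<inter> R = {}" and SA: "S \<subseteq> A"
  shows "bij_betw (\<lambda>f. (restrict f S, restrict f (A - S)))
           {f \<in> acyc A R. {a\<in>A. f a \<in> R} = S} ((S \<rightarrow>\<^sub>E R) \<times> acyc (A - S) S)"
proof (rule bij_betw_byWitness[where f'="\<lambda>(g,h). (\<lambda>x. if x \<in> S then g x else h x)"])
  show "\<forall>f\<in>{f \<in> acyc A R. {a\<in>A. f a \<in> R} = S}.
     (\<lambda>(g,h). (\<lambda>x. if x \<in> S then g x else h x)) (restrict f S, restrict f (A - S)) = f"
  proof
    fix f assume f: "f \<in> {f \<in> acyc A R. {a\<in>A. f a \<in> R} = S}"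
    then have "f \<in> A \<rightarrow>\<^sub>E (A \<union> R)" unfolding acyc_def by auto
    then show "(\<lambda>(g,h). (\<lambda>x. if x \<in> S then g x else h x)) (restrict f S, restrict f (A - S)) = f"
      using SA by (auto simp: fun_eq_iff PiE_def extensional_def)
  qed
  show "\<forall>p\<in>(S \<rightarrow>\<^sub>E R) \<times> acyc (A - S) S.
     (\<lambda>f. (restrict f S, restrict f (A - S))) ((\<lambda>(g,h). (\<lambda>x. if x \<in> S then g x else h x)) p) = p"
  proof
    fix p assume p: "p \<in> (S \<rightarrow>\<^sub>E R) \<times> acyc (A - S) S"
    obtain g h where gh: "p = (g, h)" by fastforce
    have g: "g \<in> S \<rightarrow>\<^sub>E R" and h: "h \<in> (A - S) \<rightarrow>\<^sub>E (A - S \<union> S)"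
      using p gh unfolding acyc_def by auto
    have "restrict (\<lambda>x. if x \<in> S then g x else h x) S = g"
      using g by (auto simp: fun_eq_iff PiE_def extensional_def)
    moreover have "restrict (\<lambda>x. if x \<in> S then g x else h x) (A - S) = h"
      using h by (auto simp: fun_eq_iff PiE_def extensional_def)
    ultimately show "(\<lambda>f. (restrict f S, restrict f (A - S))) ((\<lambda>(g,h). (\<lambda>x. if x \<in> S then g x else h x)) p) = p"
      using gh by simp
  qed
  show "(\<lambda>f. (restrict f S, restrict f (A - S))) ` {f \<in> acyc A R. {a\<in>A. f a \<in> R} = S}
     \<subseteq> (S \<rightarrow>\<^sub>E R) \<times> acyc (A - S) S"
  proof
    fix q assume "q \<in> (\<lambda>f. (restrict f S, restrict f (A - S))) ` {f \<in> acyc A R. {a\<in>A. f a \<in> R} = S}"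
    then obtain f where f: "f \<in> acyc A R" and fS: "{a\<in>A. f a \<in> R} = S"
      and q: "q = (restrict f S, restrict f (A - S))" by blast
    have fP: "f \<in> A \<rightarrow>\<^sub>E (A \<union> R)" and fr: "\<forall>a\<in>A. reach f R a" using f unfolding acyc_def by auto
    have "restrict f S \<in> S \<rightarrow>\<^sub>E R" using fS by auto
    moreover have "restrict f (A - S) \<in> (A - S) \<rightarrow>\<^sub>E (A - S \<union> S)"
      using fP fS by auto
    moreover have "\<forall>a\<in>A - S. reach (restrict f (A - S)) S a"
      using reach_restrict[OF f dis fS[symmetric]] fr by blast
    ultimately show "q \<in> (S \<rightarrow>\<^sub>E R) \<times> acyc (A - S) S" using q unfolding acyc_def by auto
  qed
  show "(\<lambda>(g,h). (\<lambda>x. if x \<in> S then g x else h x)) ` ((S \<rightarrow>\<^sub>E R) \<times> acyc (A - S) S)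
     \<subseteq> {f \<in> acyc A R. {a\<in>A. f a \<in> R} = S}"
  proof
    fix m assume "m \<in> (\<lambda>(g,h). (\<lambda>x. if x \<in> S then g x else h x)) ` ((S \<rightarrow>\<^sub>E R) \<times> acyc (A - S) S)"
    then obtain p where p: "p \<in> (S \<rightarrow>\<^sub>E R) \<times> acyc (A - S) S"
      and mp: "m = (\<lambda>(g,h). (\<lambda>x. if x \<in> S then g x else h x)) p" by (rule imageE)
    obtain g h where gh: "p = (g, h)" by (cases p)
    have g: "g \<in> S \<rightarrow>\<^sub>E R" and ha: "h \<in> acyc (A - S) S" using p gh by auto
    have m: "m = (\<lambda>x. if x \<in> S then g x else h x)" using mp gh by simp
    have h: "h \<in> (A - S) \<rightarrow>\<^sub>E (A - S \<union> S)" and hr: "\<forall>a\<in>A - S. reach h S a"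
      using ha unfolding acyc_def by auto
    have "m \<in> A \<rightarrow>\<^sub>E (A \<union> R)" using g h SA m by (auto simp: PiE_def extensional_def Pi_def)
    moreover have "\<forall>a\<in>A. reach m R a"
    proof
      fix a assume a: "a \<in> A"
      have "reach h S a" using hr a by (cases "a \<in> S") (auto intro: reach.rbase)
      then show "reach m R a" using reach_merge[OF ha g SA m] a by blast
    qed
    moreover have "{a\<in>A. m a \<in> R} = S"
    proof -
      have "m a \<notin> R" if a: "a \<in> A - S" for a
      proof -
        have "h a \<in> A - S \<union> S" using h a by (rule PiE_mem)
        then have "h a \<in> A" using SA by auto
        moreover have "m a = h a" using a m by simp
        ultimately show ?thesis using dis by auto
      qed
      moreover have "a \<in> S \<Longrightarrow> m a \<in> R" for a using g m by auto
      ultimately show ?thesis using SA by auto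
    qed
    ultimately show "m \<in> {f \<in> acyc A R. {a\<in>A. f a \<in> R} = S}" unfolding acyc_def by auto
  qed
qed

lemma sum_subsets_by_card:
  assumes "finite A"
  shows "(\<Sum>S\<in>{S. S \<subseteq> A \<and> S \<noteq> {}}. G (card S)) = (\<Sum>j\<in>{1..card A}. (card A choose j) * G j)"
proof -
  have fin: "finite {S. S \<subseteq> A \<and> S \<noteq> {}}" using assms by simp
  have img: "card ` {S. S \<subseteq> A \<and> S \<noteq> {}} \<subseteq> {1..card A}"
    using assms by (auto simp: card_mono Suc_le_eq card_gt_0_iff finite_subset)
  have "(\<Sum>S\<in>{S. S \<subseteq> A \<and> S \<noteq> {}}. G (card S))
     = (\<Sum>j\<in>{1..card A}. \<Sum>S\<in>{S \<in> {S. S \<subseteq> A \<and> S \<noteq> {}}. card S = j}. G (card S))"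
    by (rule sum.group[OF fin _ img, symmetric]) simp
  also have "\<dots> = (\<Sum>j\<in>{1..card A}. (card A choose j) * G j)"
  proof (rule sum.cong[OF refl])
    fix j assume j: "j \<in> {1..card A}"
    have eq: "{S \<in> {S. S \<subseteq> A \<and> S \<noteq> {}}. card S = j} = {S. S \<subseteq> A \<and> card S = j}"
      using j by auto
    show "(\<Sum>S\<in>{S \<in> {S. S \<subseteq> A \<and> S \<noteq> {}}. card S = j}. G (card S)) = (card A choose j) * G j"
      unfolding eq using n_subsets[OF assms, of j] by simp
  qed
  finally show ?thesis .
qed

lemma acyc_card:
  "finite A \<Longrightarrow> finite R \<Longrightarrow> A \<inter> R = {} \<Longrightarrow> A \<noteq> {} \<Longrightarrow>
    card (acyc A R) = card R * (card A + card R) ^ (card A - 1)"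
proof (induction "card A" arbitrary: A R rule: less_induct)
  case less
  note finA = less.prems(1) and finR = less.prems(2) and dis = less.prems(3) and ne = less.prems(4)
  define m where "m = card A"
  define k where "k = card R"
  have m0: "m > 0" using finA ne m_def by (simp add: card_gt_0_iff)
  define U where "U = {S. S \<subseteq> A \<and> S \<noteq> {}}"
  define fib where "fib S = {f \<in> acyc A R. {a\<in>A. f a \<in> R} = S}" for S
  have cover: "acyc A R = (\<Union>S\<in>U. fib S)"
  proof
    show "acyc A R \<subseteq> (\<Union>S\<in>U. fib S)"
    proof
      fix f assume f: "f \<in> acyc A R"
      obtain a where a: "a \<in> A" using ne by auto
      have "reach f R a" using f a unfolding acyc_def by auto
      then have "\<exists>b\<in>A. f b \<in> R" using acyc_nonempty_root[OF f dis] a by blast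
      then have "{a\<in>A. f a \<in> R} \<in> U" unfolding U_def by auto
      then show "f \<in> (\<Union>S\<in>U. fib S)" using f unfolding fib_def by blast
    qed
  qed (auto simp: fib_def)
  have finU: "finite U" using finA unfolding U_def by simp
  have finfib: "\<forall>S\<in>U. finite (fib S)"
    using acyc_finite[OF finA finR] unfolding fib_def by auto
  have disj: "\<forall>S\<in>U. \<forall>T\<in>U. S \<noteq> T \<longrightarrow> fib S \<inter> fib T = {}"
    unfolding fib_def by auto
  have cardfib: "card (fib S) = k ^ card S * (if card S = m then 1 else card S * m ^ (m - card S - 1))"
    if S: "S \<in> U" for S
  proof -
    have SA: "S \<subseteq> A" and Sne: "S \<noteq> {}" using S unfolding U_def by auto
    have finS: "finite S" using SA finA finite_subset by auto
    have "card (fib S) = card ((S \<rightarrow>\<^sub>E R) \<times> acyc (A - S) S)"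
      unfolding fib_def by (rule bij_betw_same_card[OF fib_bij[OF dis SA]])
    also have "\<dots> = card (S \<rightarrow>\<^sub>E R) * card (acyc (A - S) S)"
      by (rule card_cartesian_product)
    also have "card (S \<rightarrow>\<^sub>E R) = k ^ card S"
      using card_PiE[OF finS, of "\<lambda>_. R"] k_def by simp
    also have "card (acyc (A - S) S) = (if card S = m then 1 else card S * m ^ (m - card S - 1))"
    proof (cases "card S = m")
      case True
      then have "S = A" using SA finA m_def by (simp add: card_subset_eq)
      then show ?thesis using True by (simp add: acyc_def)
    next
      case False
      then have "S \<noteq> A" using m_def by auto
      then have ne2: "A - S \<noteq> {}" using SA by auto
      have cd: "card (A - S) = m - card S" using SA finS m_def by (simp add: card_Diff_subset)
      have lt: "card (A - S) < card A" using SA Sne finA finS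
        by (metis cd m_def card_gt_0_iff diff_less m0)
      have IH: "card (acyc (A - S) S) = card S * (card (A - S) + card S) ^ (card (A - S) - 1)"
        using less.hyps[OF lt _ finS _ ne2] finA by auto
      have "card S \<le> m" using card_mono[OF finA SA] m_def by simp
      then have "card (A - S) + card S = m" using cd by simp
      then show ?thesis using IH False cd by simp
    qed
    finally show ?thesis .
  qed
  have "card (acyc A R) = (\<Sum>S\<in>U. card (fib S))"
    unfolding cover by (rule card_UN_disjoint[OF finU finfib disj])
  also have "\<dots> = (\<Sum>S\<in>U. (\<lambda>j. k ^ j * (if j = m then 1 else j * m ^ (m - j - 1))) (card S))"
    using cardfib by (intro sum.cong) auto
  also have "\<dots> = (\<Sum>j\<in>{1..m}. (m choose j) * (k ^ j * (if j = m then 1 else j * m ^ (m - j - 1))))"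
    unfolding U_def m_def by (rule sum_subsets_by_card[OF finA])
  also have "\<dots> = k * (m + k) ^ (m - 1)"
  proof -
    obtain m' where m': "m = Suc m'" using m0 by (cases m) auto
    show ?thesis unfolding m' using ident[of m' k] by simp
  qed
  finally show ?case unfolding m_def k_def .
qed

lemma walk_single[simp]: "walk E [x]"
  unfolding walk_def by simp

lemma walk_Cons2[simp]: "walk E (x # y # xs) \<longleftrightarrow> {x, y} \<in> E \<and> walk E (y # xs)"
proof
  assume w: "walk E (x # y # xs)"
  have "{x, y} \<in> E" using w unfolding walk_def by (metis Suc_less_eq length_Cons nth_Cons_0 nth_Cons_Suc zero_less_Suc)
  moreover have "walk E (y # xs)" unfolding walk_def
  proof (intro conjI allI impI)
    fix i assume "Suc i < length (y # xs)"
    then have "Suc (Suc i) < length (x # y # xs)" by simp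
    then have "{(x # y # xs) ! Suc i, (x # y # xs) ! Suc (Suc i)} \<in> E" using w unfolding walk_def by blast
    then show "{(y # xs) ! i, (y # xs) ! Suc i} \<in> E" by simp
  qed simp
  ultimately show "{x, y} \<in> E \<and> walk E (y # xs)" by simp
next
  assume a: "{x, y} \<in> E \<and> walk E (y # xs)"
  show "walk E (x # y # xs)" unfolding walk_def
  proof (intro conjI allI impI)
    fix i assume i: "Suc i < length (x # y # xs)"
    show "{(x # y # xs) ! i, (x # y # xs) ! Suc i} \<in> E"
    proof (cases i)
      case 0 then show ?thesis using a by simp
    next
      case (Suc j)
      then have "Suc j < length (y # xs)" using i by simp
      then show ?thesis using a Suc unfolding walk_def by simp
    qed
  qed simp
qed

lemma walk_nonempty: "walk E xs \<Longrightarrow> xs \<noteq> []"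
  unfolding walk_def by simp

lemma walk_append:
  "walk E xs \<Longrightarrow> walk E ys \<Longrightarrow> last xs = hd ys \<Longrightarrow> walk E (xs @ tl ys)"
proof (induction xs rule: induct_list012)
  case 1 then show ?case by (simp add: walk_def)
next
  case (2 x)
  then show ?case by (cases ys) (auto simp: walk_def)
next
  case (3 x y zs)
  then show ?case by simp
qed

lemma walk_mono: "walk E xs \<Longrightarrow> E \<subseteq> F \<Longrightarrow> walk F xs"
  unfolding walk_def by blast

definition tedges :: "('a \<Rightarrow> 'a) \<Rightarrow> 'a set \<Rightarrow> 'a set set" where
  "tedges p A = (\<lambda>v. {v, p v}) ` A"

lemma acyc_PiE: "p \<in> acyc A R \<Longrightarrow> p \<in> A \<rightarrow>\<^sub>E (A \<union> R)"
  unfolding acyc_def by simp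

lemma acyc_reach: "p \<in> acyc A R \<Longrightarrow> a \<in> A \<Longrightarrow> reach p R a"
  unfolding acyc_def by simp

lemma acyc_nofix: "p \<in> acyc A R \<Longrightarrow> A \<inter> R = {} \<Longrightarrow> a \<in> A \<Longrightarrow> p a \<noteq> a"
  by (metis IntI acyc_reach empty_iff reach_not_fix)

lemma acyc_inj:
  assumes p: "p \<in> acyc A R" and dis: "A \<inter> R = {}"
  shows "inj_on (\<lambda>v. {v, p v}) A"
proof
  fix v w assume v: "v \<in> A" and w: "w \<in> A" and eq: "{v, p v} = {w, p w}"
  show "v = w"
  proof (rule ccontr)
    assume "v \<noteq> w"
    then have "v = p w" "w = p v" using eq by (auto simp: doubleton_eq_iff)
    moreover have "v \<notin> R" "w \<notin> R" using v w dis by auto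
    ultimately show False using reach_no2cycle[OF acyc_reach[OF p v]] by auto
  qed
qed

lemma card_tedges:
  assumes "p \<in> acyc A R" "A \<inter> R = {}" "finite A"
  shows "card (tedges p A) = card A"
  unfolding tedges_def using card_image[OF acyc_inj[OF assms(1,2)]] .

lemma tedges_sub:
  assumes p: "p \<in> acyc A R" and dis: "A \<inter> R = {}" and V: "A \<union> R \<subseteq> V"
  shows "tedges p A \<subseteq> {e. e \<subseteq> V \<and> card e = 2}"
proof
  fix e assume "e \<in> tedges p A"
  then obtain v where v: "v \<in> A" and e: "e = {v, p v}" unfolding tedges_def by auto
  have "p v \<in> A \<union> R" using acyc_PiE[OF p] v by (rule PiE_mem)
  moreover have "p v \<noteq> v" using acyc_nofix[OF p dis v] .
  ultimately show "e \<in> {e. e \<subseteq> V \<and> card e = 2}" using e v V by auto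
qed

lemma tedges_determines:
  assumes p: "p \<in> acyc A {r}" and q: "q \<in> acyc A {r}" and r: "r \<notin> A"
    and eq: "tedges p A = tedges q A"
  shows "p = q"
proof -
  have key: "reach q {r} x \<Longrightarrow> x \<in> A \<Longrightarrow> p x = q x" for x
  proof (induction rule: reach.induct)
    case (rbase a) then show ?case using r by auto
  next
    case (rstep a)
    have "{a, q a} \<in> tedges p A" using eq rstep.prems unfolding tedges_def by auto
    then obtain w where w: "w \<in> A" and ew: "{a, q a} = {w, p w}" unfolding tedges_def by auto
    show ?case
    proof (cases "w = a")
      case True then show ?thesis using ew by (auto simp: doubleton_eq_iff)
    next
      case False
      then have qa: "q a = w" and pw: "p w = a" using ew by (auto simp: doubleton_eq_iff)
      have "p (q a) = q (q a)" using rstep.IH qa w by simp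
      then have "q (q a) = a" using qa pw by simp
      moreover have "a \<notin> {r}" "q a \<notin> {r}" using rstep.prems qa w r by auto
      ultimately show ?thesis using reach_no2cycle[OF acyc_reach[OF q rstep.prems]] by auto
    qed
  qed
  show ?thesis
  proof
    fix x
    show "p x = q x"
    proof (cases "x \<in> A")
      case True then show ?thesis using key acyc_reach[OF q True] by blast
    next
      case False
      then show ?thesis using acyc_PiE[OF p] acyc_PiE[OF q] by (simp add: PiE_def extensional_def)
    qed
  qed
qed

lemma acyc_walks:
  assumes p: "p \<in> acyc A {r}"
  shows "reach p {r} x \<Longrightarrow> x \<in> A \<union> {r} \<Longrightarrow>
     (\<exists>xs. walk (tedges p A) xs \<and> hd xs = x \<and> last xs = r) \<and>
     (\<exists>ys. walk (tedges p A) ys \<and> hd ys = r \<and> last ys = x)"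
proof (induction rule: reach.induct)
  case (rbase a)
  then have "a = r" by simp
  then show ?case by (intro conjI exI[of _ "[a]"]) simp_all
next
  case (rstep a)
  show ?case
  proof (cases "a = r")
    case True
    then show ?thesis by (intro conjI exI[of _ "[a]"]) simp_all
  next
    case False
    then have aA: "a \<in> A" using rstep.prems by simp
    have pa: "p a \<in> A \<union> {r}" using acyc_PiE[OF p] aA by (rule PiE_mem)
    have ed: "{a, p a} \<in> tedges p A" using aA unfolding tedges_def by auto
    then have ed2: "{p a, a} \<in> tedges p A" by (simp add: insert_commute)
    obtain xs where xs: "walk (tedges p A) xs" "hd xs = p a" "last xs = r" using rstep.IH pa by blast
    obtain ys where ys: "walk (tedges p A) ys" "hd ys = r" "last ys = p a" using rstep.IH pa by blast
    obtain t where t: "xs = p a # t" using xs walk_nonempty by (cases xs) auto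
    have w1: "walk (tedges p A) (a # xs)" using xs(1) ed t by simp
    have w0: "walk (tedges p A) [p a, a]" using ed2 by simp
    have "walk (tedges p A) (ys @ tl [p a, a])" using walk_append[OF ys(1) w0] ys(3) by simp
    then have w2: "walk (tedges p A) (ys @ [a])" by simp
    have "ys \<noteq> []" using walk_nonempty ys(1) by blast
    then have "hd (ys @ [a]) = r" using ys(2) by simp
    moreover have "last (a # xs) = r" using xs(3) t by simp
    ultimately show ?thesis using w1 w2 by auto
  qed
qed

lemma acyc_connected:
  assumes p: "p \<in> acyc A {r}" and r: "r \<notin> A" and E: "tedges p A \<subseteq> G"
  shows "connected_graph (A \<union> {r}) G"
  unfolding connected_graph_def
proof (intro conjI ballI)
  show "A \<union> {r} \<noteq> {}" by simp
  fix u v assume u: "u \<in> A \<union> {r}" and v: "v \<in> A \<union> {r}"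
  have ru: "reach p {r} u" using u acyc_reach[OF p] by (auto intro: reach.rbase)
  have rv: "reach p {r} v" using v acyc_reach[OF p] by (auto intro: reach.rbase)
  obtain xs where xs: "walk (tedges p A) xs" "hd xs = u" "last xs = r"
    using acyc_walks[OF p ru u] by blast
  obtain ys where ys: "walk (tedges p A) ys" "hd ys = r" "last ys = v"
    using acyc_walks[OF p rv v] by blast
  have w: "walk (tedges p A) (xs @ tl ys)" using walk_append[OF xs(1) ys(1)] xs(3) ys(2) by simp
  have xne: "xs \<noteq> []" and yne: "ys \<noteq> []" using xs(1) ys(1) walk_nonempty by blast+
  have "hd (xs @ tl ys) = u" using xne xs(2) by simp
  moreover have "last (xs @ tl ys) = v"
  proof (cases "tl ys = []")
    case True
    then have "ys = [r]" using yne ys(2) by (cases ys) auto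
    then show ?thesis using True xs(3) ys(3) by simp
  next
    case False
    then have "last (tl ys) = last ys" using yne by (cases ys) auto
    then show ?thesis using False ys(3) by simp
  qed
  ultimately show "\<exists>xs. walk G xs \<and> hd xs = u \<and> last xs = v"
    using walk_mono[OF w E] by blast
qed

lemma real_choose2: "real (n choose 2) = real n * (real n - 1) / 2"
proof -
  have "even (n * (n - 1))" by auto
  then have "2 * (n choose 2) = n * (n - 1)" unfolding choose_two by simp
  then have "2 * real (n choose 2) = real n * real (n - 1)" by (metis of_nat_mult of_nat_numeral)
  moreover have "real (n - 1) = real n - 1 \<or> n = 0" by auto
  ultimately show ?thesis by auto
qed

lemma ratio:
  fixes n h :: nat
  assumes n5: "n \<ge> 5" and hb: "real h \<le> real n^2/2 - 5*real n/2"
  shows "((real n^2 - 3*real n)/(2*(real n + real h)))^h * real ((n-1+h) choose h)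
         \<le> real (((n choose 2) - (n-1)) choose h)"
proof -
  define q where "q = (real n^2 - 3*real n)/(2*(real n + real h))"
  define N where "N = n - 1 + h"
  define M where "M = (n choose 2) - (n-1)"
  have rN: "real N = real n - 1 + real h" using n5 N_def by auto
  have c2: "real (n choose 2) = real n * (real n - 1) / 2" by (rule real_choose2)
  have "n - 1 \<le> n choose 2"
  proof -
    have e: "real n * (real n - 1) / 2 - (real n - 1) = (real n - 1) * (real n - 2) / 2"
      by (simp add: field_simps)
    have nn: "(real n - 1) * (real n - 2) / 2 \<ge> 0" using n5 by simp
    have "real (n - 1) = real n - 1" using n5 by simp
    then have "real (n - 1) \<le> real (n choose 2)" using c2 e nn by linarith
    then show ?thesis by linarith
  qed
  note hle = this
  have "real M = real (n choose 2) - real (n - 1)" unfolding M_def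
    by (rule of_nat_diff[OF hle])
  moreover have "real (n - 1) = real n - 1" using n5 by simp
  ultimately have "real M = real (n choose 2) - (real n - 1)" by simp
  then have rM: "real M = (real n^2 - 3*real n + 2)/2" unfolding c2
    by (simp add: power2_eq_square field_simps)
  have pos: "real n + real h > 0" using n5 by simp
  have q1: "q \<ge> 1" unfolding q_def using pos hb by (simp add: field_simps)
  have qN: "q * real N \<le> real M"
  proof -
    have "q * real N = (real n^2 - 3*real n) * ((real n + real h - 1) / (real n + real h)) / 2"
      unfolding q_def rN by (simp add: field_simps)
    also have "\<dots> \<le> (real n^2 - 3*real n) * 1 / 2"
    proof -
      have "real n^2 - 3*real n = real n * (real n - 3)" by (simp add: power2_eq_square field_simps)
      moreover have "real n * (real n - 3) \<ge> 0" using n5 by simp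
      ultimately have "real n^2 - 3*real n \<ge> 0" by simp
      moreover have "(real n + real h - 1) / (real n + real h) \<le> 1" using pos by simp
      ultimately show ?thesis by (intro divide_right_mono mult_left_mono) auto
    qed
    also have "\<dots> \<le> real M" using rM by simp
    finally show ?thesis .
  qed
  have "q^h * real (N choose h) = (\<Prod>i = 0..<h. q) * (\<Prod>i = 0..<h. (real N - real i) / real (h - i))"
    by (simp add: binomial_gbinomial gbinomial_altdef_of_nat)
  also have "\<dots> = (\<Prod>i = 0..<h. q * ((real N - real i) / real (h - i)))"
    by (rule prod.distrib[symmetric])
  also have "\<dots> \<le> (\<Prod>i = 0..<h. (real M - real i) / real (h - i))"
  proof (rule prod_mono)
    fix i assume i: "i \<in> {0..<h}"
    have Ni: "real N - real i > 0" using i rN n5 by simp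
    have qi: "1 * real i \<le> q * real i" using q1 by (rule mult_right_mono) simp
    have "q * (real N - real i) = q * real N - q * real i" by (simp add: right_diff_distrib)
    then have le1: "q * (real N - real i) \<le> real M - real i" using qN qi by linarith
    have hi: "real (h - i) > 0" using i by simp
    have "0 \<le> q * ((real N - real i) / real (h - i))" using q1 Ni hi by simp
    moreover have "q * ((real N - real i) / real (h - i)) = (q * (real N - real i)) / real (h - i)" by simp
    moreover have "(q * (real N - real i)) / real (h - i) \<le> (real M - real i) / real (h - i)"
      using le1 hi by (intro divide_right_mono) auto
    ultimately show "0 \<le> q * ((real N - real i) / real (h - i)) \<and>
        q * ((real N - real i) / real (h - i)) \<le> (real M - real i) / real (h - i)"
      by simp
  qed
  also have "\<dots> = real (M choose h)"
    by (simp add: binomial_gbinomial gbinomial_altdef_of_nat)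
  finally show ?thesis unfolding q_def N_def M_def .
qed

theorem lemma4:
  fixes n h :: nat
  assumes "n \<ge> 1"
    and "real h \<le> (real n)^2 / 2 - 5 * real n / 2"
  shows "real (card (C h n)) \<ge>
           real n ^ (n - 2) * ((real n ^ 2 - 3 * real n) / (2 * (real n + real h))) ^ h"
proof -
  have n5: "n \<ge> 5"
  proof (rule ccontr)
    assume "\<not> 5 \<le> n"
    then have "n \<in> {1,2,3,4}" using assms(1) by auto
    then show False using assms(2) by (auto simp: power2_eq_square)
  qed
  define A where "A = {2..n}"
  define R where "R = {1::nat}"
  define V where "V = {1..n}"
  define U where "U = {e. e \<subseteq> V \<and> card e = 2}"
  define P where "P = acyc A R"
  have finA: "finite A" and finR: "finite R" and dis: "A \<inter> R = {}" and Ane: "A \<noteq> {}"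
    using n5 unfolding A_def R_def by auto
  have AR: "A \<union> R = V" using n5 unfolding A_def R_def V_def by auto
  have cA: "card A = n - 1" unfolding A_def by simp
  have cP: "card P = n ^ (n - 2)"
    unfolding P_def using acyc_card[OF finA finR dis Ane] cA n5 R_def
    by (simp add: numeral_2_eq_2)
  have finP: "finite P" unfolding P_def by (rule acyc_finite[OF finA finR])
  have finU: "finite U" unfolding U_def V_def by simp
  have cU: "card U = n choose 2" unfolding U_def V_def using n_subsets[of "{1..n}" 2] by simp
  have Tsub: "tedges p A \<subseteq> U" if "p \<in> P" for p
    using tedges_sub[OF that[unfolded P_def] dis] AR unfolding U_def by simp
  have cT: "card (tedges p A) = n - 1" if "p \<in> P" for p
    using card_tedges[OF that[unfolded P_def] dis finA] cA by simp
  define X where "X = Sigma P (\<lambda>p. {S. S \<subseteq> U - tedges p A \<and> card S = h})"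
  define Bm where "Bm = ((n choose 2) - (n - 1)) choose h"
  define Bn where "Bn = (n - 1 + h) choose h"
  have cX: "card X = n ^ (n - 2) * Bm"
  proof -
    have "card X = (\<Sum>p\<in>P. card {S. S \<subseteq> U - tedges p A \<and> card S = h})"
      unfolding X_def using finP finU by (intro card_SigmaI) auto
    also have "\<dots> = (\<Sum>p\<in>P. Bm)"
    proof (rule sum.cong[OF refl])
      fix p assume p: "p \<in> P"
      have "card (U - tedges p A) = (n choose 2) - (n - 1)"
        using card_Diff_subset[OF finite_subset[OF Tsub[OF p] finU] Tsub[OF p]] cU cT[OF p] by simp
      then show "card {S. S \<subseteq> U - tedges p A \<and> card S = h} = Bm"
        unfolding Bm_def using n_subsets[of "U - tedges p A" h] finU by simp
    qed
    also have "\<dots> = n ^ (n - 2) * Bm" using cP by simp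
    finally show ?thesis .
  qed
  define Phi where "Phi = (\<lambda>(p, S). tedges p A \<union> S)"
  have PhiX: "Phi x \<in> C h n \<and> card (Phi x) = n - 1 + h \<and> tedges (fst x) A \<inter> snd x = {}
      \<and> Phi x = tedges (fst x) A \<union> snd x" if x: "x \<in> X" for x
  proof -
    obtain p S where xs: "x = (p, S)" by (cases x)
    have p: "p \<in> P" and S: "S \<subseteq> U - tedges p A" and cS: "card S = h" using x xs unfolding X_def by auto
    have finT: "finite (tedges p A)" using finite_subset[OF Tsub[OF p] finU] .
    have finS: "finite S" using S finU finite_subset by blast
    have disj: "tedges p A \<inter> S = {}" using S by auto
    have cG: "card (tedges p A \<union> S) = n - 1 + h" using card_Un_disjoint[OF finT finS disj] cT[OF p] cS by simp
    have sg: "simple_graph {1..n} (tedges p A \<union> S)"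
      using Tsub[OF p] S unfolding simple_graph_def U_def V_def by auto
    have "connected_graph (A \<union> {1}) (tedges p A \<union> S)"
      using acyc_connected[OF p[unfolded P_def R_def], of "tedges p A \<union> S"] unfolding A_def by auto
    then have cg: "connected_graph {1..n} (tedges p A \<union> S)" using AR unfolding R_def V_def by simp
    have "tedges p A \<union> S \<in> C h n" unfolding C_def using sg cg cG n5 by simp
    then show ?thesis using xs cG disj unfolding Phi_def by simp
  qed
  have finC: "finite (C h n)"
  proof (rule finite_subset[of _ "Pow U"])
    show "C h n \<subseteq> Pow U" unfolding C_def simple_graph_def U_def V_def by auto
  qed (use finU in simp)
  have finX: "finite X" unfolding X_def using finP finU by auto
  define fib where "fib G = {x \<in> X. Phi x = G}" for G
  have fibbound: "card (fib G) \<le> Bn" if G: "G \<in> Phi ` X" for G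
  proof -
    obtain x0 where x0: "x0 \<in> X" and G0: "G = Phi x0" using G by auto
    have cG: "card G = n - 1 + h" using conjunct1[OF conjunct2[OF PhiX[OF x0]]] G0 by simp
    have finG: "finite G" using cG n5 card_ge_0_finite by force
    have inj: "inj_on snd (fib G)"
    proof
      fix x y assume x: "x \<in> fib G" and y: "y \<in> fib G" and eq: "snd x = snd y"
      have xX: "x \<in> X" and yX: "y \<in> X" and Gx: "Phi x = G" and Gy: "Phi y = G" using x y unfolding fib_def by auto
      have px: "fst x \<in> P" and py: "fst y \<in> P" using xX yX unfolding X_def by auto
      have "tedges (fst x) A = G - snd x" using PhiX[OF xX] Gx by auto
      moreover have "tedges (fst y) A = G - snd y" using PhiX[OF yX] Gy by auto
      ultimately have "tedges (fst x) A = tedges (fst y) A" using eq by simp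
      then have "fst x = fst y"
        using tedges_determines[OF px[unfolded P_def R_def] py[unfolded P_def R_def]] unfolding A_def by auto
      then show "x = y" using eq by (simp add: prod_eq_iff)
    qed
    have "snd ` fib G \<subseteq> {S. S \<subseteq> G \<and> card S = h}"
    proof
      fix S assume "S \<in> snd ` fib G"
      then obtain x where x: "x \<in> fib G" and S: "S = snd x" by auto
      have xX: "x \<in> X" and Gx: "Phi x = G" using x unfolding fib_def by auto
      have "snd x \<subseteq> G" using PhiX[OF xX] Gx by auto
      moreover have "card (snd x) = h" using xX unfolding X_def by auto
      ultimately show "S \<in> {S. S \<subseteq> G \<and> card S = h}" using S by simp
    qed
    then have "card (snd ` fib G) \<le> card {S. S \<subseteq> G \<and> card S = h}"
      using finG by (intro card_mono) auto
    also have "\<dots> = Bn" unfolding Bn_def using n_subsets[OF finG] cG by simp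
    finally show ?thesis using card_image[OF inj] by simp
  qed
  have XU: "X = (\<Union>G\<in>Phi ` X. fib G)" unfolding fib_def by auto
  have "card X \<le> (\<Sum>G\<in>Phi ` X. card (fib G))"
    by (subst XU) (rule card_UN_le, use finX in simp)
  also have "\<dots> \<le> card (Phi ` X) * Bn"
    using sum_bounded_above[of "Phi ` X" "\<lambda>G. card (fib G)" Bn] fibbound by simp
  also have "\<dots> \<le> card (C h n) * Bn"
  proof -
    have "Phi ` X \<subseteq> C h n" using PhiX by blast
    then show ?thesis using card_mono[OF finC] by (intro mult_right_mono) auto
  qed
  finally have main: "n ^ (n - 2) * Bm \<le> card (C h n) * Bn" using cX by simp
  define q where "q = (real n ^ 2 - 3 * real n) / (2 * (real n + real h))"
  have rat: "q ^ h * real Bn \<le> real Bm"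
    unfolding q_def Bn_def Bm_def using ratio[OF n5 assms(2)] by simp
  have Bnpos: "real Bn > 0" unfolding Bn_def by simp
  have "(real n ^ (n - 2) * q ^ h) * real Bn \<le> real n ^ (n - 2) * real Bm"
    using rat by (simp add: mult.assoc mult_left_mono)
  also have "\<dots> \<le> real (card (C h n)) * real Bn"
    using main by (metis of_nat_le_iff of_nat_mult of_nat_power)
  finally have "real n ^ (n - 2) * q ^ h \<le> real (card (C h n))"
    using Bnpos by (simp add: mult_le_cancel_right_pos)
  then show ?thesis unfolding q_def .
qed

end
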